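(* Let $k,\ell,n\in\mathbb{N}$ (with $k\ge 0$) and let $k'=(2\ell+1)k+\ell$. Then $$H\big(\partial(k,n)\,\big|\,\partial(k',n)\big)\le \mathbb{E}[M(k',n)]\cdot(2\ell+1)^2.$$
   Context: $S$ is simple symmetric random walk on $\mathbb{Z}^2$ started at $0$, $R(n)=\{S(0),\ldots,S(n)\}$. The inner boundary of $A\subset\mathbb{Z}^2$ is $\partial A=\{a\in A: a \text{ is at graph distance } 1 \text{ from some vertex of } \mathbb{Z}^2\setminus A\}$. For $z\in\mathbb{Z}^2$, $k\ge0$: $Q(z,k)=\{z+(j,j'): -k\le j,j'\le k\}$; $\Lambda(k)=\{(2k+1)z: z\in\mathbb{Z}^2\}$. $I(z,k,n)$ is the indicator of $\{\partial R(n)\cap Q(z,k)\ne\emptyset\}$, $M(k,n)=\sum_{z\in\Lambda(k)}I(z,k,n)$, and $\partial(k,n)$ denotes the random vector $(I(z,k,n))_{z\in\Lambda(k)\cap[-2n,2n]^2}$. Entropy: $H(X)=\mathbb{E}[-\log_2 p(X)]$ with $p(x)=\Pr[X=x]$, and conditional entropy $H(X\mid Y)=H(X,Y)-H(Y)$. *)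

theory Defs
  imports "HOL-Probability.Probability" "HOL-Library.FuncSet"
begin

type_synonym pt = "int \<times> int"

definition unit_steps :: "pt set" where
  "unit_steps = {(1,0), (-1,0), (0,1), (0,-1)}"

definition paths :: "nat \<Rightarrow> pt list set" where
  "paths n = {xs. length xs = n \<and> set xs \<subseteq> unit_steps}"

definition walk :: "nat \<Rightarrow> pt list pmf" where
  "walk n = pmf_of_set (paths n)"

definition pos :: "pt list \<Rightarrow> nat \<Rightarrow> pt" where
  "pos xs j = (sum_list (map fst (take j xs)), sum_list (map snd (take j xs)))"

definition rng :: "nat \<Rightarrow> pt list \<Rightarrow> pt set" where
  "rng n xs = pos xs ` {0..n}"

definition inner_bdry :: "pt set \<Rightarrow> pt set" where
  "inner_bdry A = {a \<in> A. \<exists>b. b \<notin> A \<and> \<bar>fst a - fst b\<bar> + \<bar>snd a - snd b\<bar> = 1}"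

definition Qbox :: "pt \<Rightarrow> nat \<Rightarrow> pt set" where
  "Qbox z k = {(fst z + j, snd z + j') | j j'.
      - int k \<le> j \<and> j \<le> int k \<and> - int k \<le> j' \<and> j' \<le> int k}"

definition Lam :: "nat \<Rightarrow> pt set" where
  "Lam k = {((2 * int k + 1) * a, (2 * int k + 1) * b) | a b. True}"

definition Ind :: "pt \<Rightarrow> nat \<Rightarrow> nat \<Rightarrow> pt list \<Rightarrow> bool" where
  "Ind z k n xs \<longleftrightarrow> inner_bdry (rng n xs) \<inter> Qbox z k \<noteq> {}"

text \<open>M(k,n) = sum over z in Lambda(k) of I(z,k,n) (only finitely many nonzero terms).\<close>
definition Mcount :: "nat \<Rightarrow> nat \<Rightarrow> pt list \<Rightarrow> nat" where
  "Mcount k n xs = card {z \<in> Lam k. Ind z k n xs}"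

definition sqbox :: "nat \<Rightarrow> pt set" where
  "sqbox n = {z. \<bar>fst z\<bar> \<le> 2 * int n \<and> \<bar>snd z\<bar> \<le> 2 * int n}"

definition bvec :: "nat \<Rightarrow> nat \<Rightarrow> pt list \<Rightarrow> (pt \<Rightarrow> bool)" where
  "bvec k n xs = restrict (\<lambda>z. Ind z k n xs) (Lam k \<inter> sqbox n)"

definition entropy2 :: "'a pmf \<Rightarrow> ('a \<Rightarrow> 'b) \<Rightarrow> real" where
  "entropy2 p X = (\<Sum>x\<in>set_pmf (map_pmf X p).
      - pmf (map_pmf X p) x * log 2 (pmf (map_pmf X p) x))"

definition cond_entropy2 :: "'a pmf \<Rightarrow> ('a \<Rightarrow> 'b) \<Rightarrow> ('a \<Rightarrow> 'c) \<Rightarrow> real" where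
  "cond_entropy2 p X Y = entropy2 p (\<lambda>\<omega>. (X \<omega>, Y \<omega>)) - entropy2 p Y"

end

theory Submission
  imports Defs
begin


lemma fin_expect:
  fixes M :: "'a pmf" and f :: "'a \<Rightarrow> real"
  assumes "finite (set_pmf M)"
  shows "measure_pmf.expectation M f = (\<Sum>a\<in>set_pmf M. pmf M a * f a)"
  using integral_measure_pmf_real[OF assms, where f=f] by (simp add: mult.commute)

lemma term_ineq:
  fixes a c :: real
  assumes "a > 0" "c > 0"
  shows "a * log 2 (c / a) \<le> (c - a) / ln 2"
proof -
  have "ln (c/a) \<le> c/a - 1" using assms by (intro ln_le_minus_one) simp
  hence "a * ln (c/a) \<le> a * (c/a - 1)" using assms by (intro mult_left_mono) auto
  also have "\<dots> = c - a" using assms by (simp add: field_simps)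
  finally have "a * ln (c/a) \<le> c - a" .
  hence "a * ln (c/a) / ln 2 \<le> (c - a) / ln 2" by (intro divide_right_mono) auto
  thus ?thesis by (simp add: log_def)
qed

lemma gibbs:
  fixes p :: "'a pmf" and X :: "'a \<Rightarrow> 'b" and Y :: "'a \<Rightarrow> 'c"
    and w :: "'b \<Rightarrow> 'c \<Rightarrow> real" and S :: "'c \<Rightarrow> 'b set"
  assumes fin: "finite (set_pmf p)"
    and XS: "\<And>\<omega>. \<omega> \<in> set_pmf p \<Longrightarrow> X \<omega> \<in> S (Y \<omega>)"
    and Sfin: "\<And>y. finite (S y)" and wpos: "\<And>x y. w x y > 0"
    and wsum: "\<And>y. (\<Sum>x\<in>S y. w x y) \<le> 1"
  shows "cond_entropy2 p X Y \<le> measure_pmf.expectation p (\<lambda>\<omega>. - log 2 (w (X \<omega>) (Y \<omega>)))"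
proof -
  define J where "J = map_pmf (\<lambda>\<omega>. (X \<omega>, Y \<omega>)) p"
  define Jy where "Jy = map_pmf Y p"
  have JyJ: "Jy = map_pmf snd J" unfolding J_def Jy_def by (simp add: map_pmf_comp)
  have finJ: "finite (set_pmf J)" unfolding J_def using fin by simp
  have finJy: "finite (set_pmf Jy)" unfolding Jy_def using fin by simp
  define W :: "'b \<times> 'c \<Rightarrow> real" where "W = (\<lambda>z. w (fst z) (snd z))"
  define Q :: "'b \<times> 'c \<Rightarrow> real" where "Q = (\<lambda>z. pmf Jy (snd z))"
  have E1: "entropy2 p (\<lambda>\<omega>. (X \<omega>, Y \<omega>)) = (\<Sum>z\<in>set_pmf J. pmf J z * (- log 2 (pmf J z)))"
    unfolding entropy2_def J_def by simp
  have "entropy2 p Y = (\<Sum>y\<in>set_pmf Jy. pmf Jy y * (- log 2 (pmf Jy y)))"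
    unfolding entropy2_def Jy_def by simp
  also have "\<dots> = measure_pmf.expectation Jy (\<lambda>y. - log 2 (pmf Jy y))"
    using fin_expect[OF finJy] by (simp add: sum_negf)
  also have "\<dots> = measure_pmf.expectation J (\<lambda>z. - log 2 (Q z))"
    unfolding Q_def by (subst JyJ) simp
  also have "\<dots> = (\<Sum>z\<in>set_pmf J. pmf J z * (- log 2 (Q z)))"
    using fin_expect[OF finJ] by (simp add: sum_negf)
  finally have E2: "entropy2 p Y = \<dots>" .
  have E3: "measure_pmf.expectation p (\<lambda>\<omega>. - log 2 (w (X \<omega>) (Y \<omega>)))
      = (\<Sum>z\<in>set_pmf J. pmf J z * (- log 2 (W z)))"
  proof -
    have "measure_pmf.expectation p (\<lambda>\<omega>. - log 2 (w (X \<omega>) (Y \<omega>)))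
        = measure_pmf.expectation J (\<lambda>z. - log 2 (W z))" unfolding J_def W_def by simp
    thus ?thesis using fin_expect[OF finJ] by (simp add: sum_negf)
  qed
  have Qpos: "Q z > 0" if "z \<in> set_pmf J" for z
  proof -
    have "snd z \<in> set_pmf Jy" using that unfolding JyJ by simp
    thus ?thesis unfolding Q_def by (simp add: pmf_positive)
  qed
  have key: "pmf J z * (- log 2 (pmf J z)) - pmf J z * (- log 2 (Q z)) - pmf J z * (- log 2 (W z))
      \<le> (W z * Q z - pmf J z) / ln 2" if z: "z \<in> set_pmf J" for z
  proof -
    have a: "pmf J z > 0" using z by (simp add: pmf_positive)
    have b: "W z > 0" unfolding W_def using wpos by simp
    have c: "Q z > 0" using Qpos z by simp
    have "log 2 (W z * Q z / pmf J z) = log 2 (W z) + log 2 (Q z) - log 2 (pmf J z)"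
      using a b c by (simp add: log_mult log_divide)
    hence "pmf J z * (- log 2 (pmf J z)) - pmf J z * (- log 2 (Q z)) - pmf J z * (- log 2 (W z))
        = pmf J z * log 2 (W z * Q z / pmf J z)" by (simp only: ring_distribs)
    also have "\<dots> \<le> (W z * Q z - pmf J z) / ln 2" using term_ineq[OF a] b c by simp
    finally show ?thesis .
  qed
  have sumWQ: "(\<Sum>z\<in>set_pmf J. W z * Q z) \<le> 1"
  proof -
    have sub: "set_pmf J \<subseteq> prod.swap ` Sigma (set_pmf Jy) S"
      unfolding J_def Jy_def using XS by (fastforce simp: image_iff)
    have finS: "finite (prod.swap ` Sigma (set_pmf Jy) S)" using finJy Sfin by auto
    have "(\<Sum>z\<in>set_pmf J. W z * Q z) \<le> (\<Sum>z\<in>prod.swap ` Sigma (set_pmf Jy) S. W z * Q z)"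
      using sub finS by (intro sum_mono2) (auto simp: W_def Q_def intro!: mult_nonneg_nonneg less_imp_le[OF wpos])
    also have "\<dots> = (\<Sum>u\<in>Sigma (set_pmf Jy) S. W (prod.swap u) * Q (prod.swap u))"
      by (subst sum.reindex) auto
    also have "\<dots> = (\<Sum>y\<in>set_pmf Jy. \<Sum>x\<in>S y. w x y * pmf Jy y)"
      unfolding W_def Q_def using sum.Sigma[OF finJy, of S "\<lambda>y x. w x y * pmf Jy y"] Sfin
      by (simp add: case_prod_beta)
    also have "\<dots> = (\<Sum>y\<in>set_pmf Jy. pmf Jy y * (\<Sum>x\<in>S y. w x y))"
      by (simp add: sum_distrib_left mult.commute)
    also have "\<dots> \<le> (\<Sum>y\<in>set_pmf Jy. pmf Jy y * 1)"
      by (intro sum_mono mult_left_mono wsum) auto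
    also have "\<dots> = 1" using sum_pmf_eq_1[OF finJy] by simp
    finally show ?thesis .
  qed
  have "cond_entropy2 p X Y - measure_pmf.expectation p (\<lambda>\<omega>. - log 2 (w (X \<omega>) (Y \<omega>)))
      = (\<Sum>z\<in>set_pmf J. pmf J z * (- log 2 (pmf J z)) - pmf J z * (- log 2 (Q z)) - pmf J z * (- log 2 (W z)))"
    unfolding cond_entropy2_def E1 E2 E3 by (simp only: sum_subtractf)
  also have "\<dots> \<le> (\<Sum>z\<in>set_pmf J. (W z * Q z - pmf J z) / ln 2)"
    by (intro sum_mono key)
  also have "\<dots> = ((\<Sum>z\<in>set_pmf J. W z * Q z) - (\<Sum>z\<in>set_pmf J. pmf J z)) / ln 2"
    by (simp only: sum_divide_distrib[symmetric] sum_subtractf)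
  also have "\<dots> \<le> 0" using sumWQ sum_pmf_eq_1[OF finJ]
    by (intro divide_nonpos_pos) auto
  finally show ?thesis by simp
qed



lemma Qbox_iff: "b \<in> Qbox z k \<longleftrightarrow> \<bar>fst b - fst z\<bar> \<le> int k \<and> \<bar>snd b - snd z\<bar> \<le> int k"
proof
  assume "b \<in> Qbox z k" thus "\<bar>fst b - fst z\<bar> \<le> int k \<and> \<bar>snd b - snd z\<bar> \<le> int k"
    unfolding Qbox_def by auto
next
  assume h: "\<bar>fst b - fst z\<bar> \<le> int k \<and> \<bar>snd b - snd z\<bar> \<le> int k"
  show "b \<in> Qbox z k" unfolding Qbox_def
    by (rule CollectI, rule exI[of _ "fst b - fst z"], rule exI[of _ "snd b - snd z"]) (use h in auto)
qed

lemma steps_bound: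
  "set xs \<subseteq> unit_steps \<Longrightarrow> \<bar>sum_list (map fst xs)\<bar> + \<bar>sum_list (map snd xs)\<bar> \<le> int (length xs)"
proof (induction xs)
  case Nil thus ?case by simp
next
  case (Cons x xs)
  have "x \<in> unit_steps" using Cons.prems by simp
  hence "\<bar>fst x\<bar> + \<bar>snd x\<bar> \<le> 1" unfolding unit_steps_def by auto
  with Cons show ?case by simp
qed

lemma pos_bound:
  assumes "xs \<in> paths n"
  shows "\<bar>fst (pos xs j)\<bar> \<le> int n \<and> \<bar>snd (pos xs j)\<bar> \<le> int n"
proof -
  have s1: "set xs \<subseteq> unit_steps" and l1: "length xs = n" using assms unfolding paths_def by auto
  have "set (take j xs) \<subseteq> unit_steps" using s1 set_take_subset by (rule order_trans[rotated])
  hence h: "\<bar>sum_list (map fst (take j xs))\<bar> + \<bar>sum_list (map snd (take j xs))\<bar> \<le> int (length (take j xs))"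
    by (rule steps_bound)
  have "length (take j xs) \<le> n" using l1 by simp
  hence "int (length (take j xs)) \<le> int n" by linarith
  with h have "\<bar>fst (pos xs j)\<bar> + \<bar>snd (pos xs j)\<bar> \<le> int n" unfolding pos_def by simp
  thus ?thesis by linarith
qed

lemma bdry_bound:
  assumes "xs \<in> paths n" "b \<in> inner_bdry (rng n xs)"
  shows "\<bar>fst b\<bar> \<le> int n \<and> \<bar>snd b\<bar> \<le> int n"
proof -
  have "b \<in> rng n xs" using assms(2) unfolding inner_bdry_def by blast
  then obtain j where "b = pos xs j" unfolding rng_def by blast
  thus ?thesis using pos_bound[OF assms(1)] by simp
qed

lemma coord_in:
  fixes c b1 :: int and K n :: nat
  assumes "\<bar>b1 - (2 * int K + 1) * c\<bar> \<le> int K" "\<bar>b1\<bar> \<le> int n"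
  shows "\<bar>(2 * int K + 1) * c\<bar> \<le> 2 * int n"
proof (cases "c = 0")
  case True thus ?thesis by simp
next
  case False
  have "\<bar>(2 * int K + 1) * c\<bar> = (2 * int K + 1) * \<bar>c\<bar>" by (simp add: abs_mult)
  also have "\<dots> \<ge> (2 * int K + 1) * 1" using False by (intro mult_left_mono) auto
  finally have "\<bar>(2 * int K + 1) * c\<bar> \<ge> 2 * int K + 1" by simp
  moreover have "\<bar>(2 * int K + 1) * c\<bar> \<le> int n + int K" using assms by linarith
  ultimately show ?thesis by linarith
qed

lemma parent_in_sqbox:
  assumes "xs \<in> paths n" "t \<in> Lam K" "Ind t K n xs"
  shows "t \<in> sqbox n"
proof -
  obtain b where b: "b \<in> inner_bdry (rng n xs)" "b \<in> Qbox t K"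
    using assms(3) unfolding Ind_def by auto
  obtain c d where t: "t = ((2 * int K + 1) * c, (2 * int K + 1) * d)"
    using assms(2) unfolding Lam_def by auto
  have bb: "\<bar>fst b\<bar> \<le> int n \<and> \<bar>snd b\<bar> \<le> int n" using bdry_bound[OF assms(1) b(1)] .
  have q: "\<bar>fst b - fst t\<bar> \<le> int K \<and> \<bar>snd b - snd t\<bar> \<le> int K" using b(2) Qbox_iff by blast
  have "\<bar>(2 * int K + 1) * c\<bar> \<le> 2 * int n" using coord_in[of "fst b" K c n] q bb t by simp
  moreover have "\<bar>(2 * int K + 1) * d\<bar> \<le> 2 * int n" using coord_in[of "snd b" K d n] q bb t by simp
  ultimately show ?thesis unfolding sqbox_def t by simp
qed

lemma coord_parent:
  fixes a :: int and k l :: nat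
  fixes c i :: int
  assumes c_def: "c = (a + int l) div (2 * int l + 1)"
  assumes i_def: "i = (a + int l) mod (2 * int l + 1) - int l"
  shows "(2 * int k + 1) * a = (2 * int k + 1) * (2 * int l + 1) * c + (2 * int k + 1) * i"
    and "- int l \<le> i" "i \<le> int l"
    and "\<And>j. \<bar>j\<bar> \<le> int k \<Longrightarrow> \<bar>(2 * int k + 1) * i + j\<bar> \<le> (2 * int k + 1) * int l + int k"
proof -
  have dm: "a + int l = (2 * int l + 1) * c + (a + int l) mod (2 * int l + 1)"
    unfolding c_def by simp
  have a: "a = (2 * int l + 1) * c + i" using dm unfolding i_def by linarith
  show "(2 * int k + 1) * a = (2 * int k + 1) * (2 * int l + 1) * c + (2 * int k + 1) * i"
    unfolding a by (simp add: algebra_simps)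
  have r: "0 \<le> (a + int l) mod (2 * int l + 1)" "(a + int l) mod (2 * int l + 1) \<le> 2 * int l"
    using pos_mod_bound[of "2*int l+1" "a+int l"] pos_mod_sign[of "2*int l+1" "a+int l"] by linarith+
  show il: "- int l \<le> i" "i \<le> int l" unfolding i_def using r by linarith+
  fix j :: int assume j: "\<bar>j\<bar> \<le> int k"
  have "\<bar>i\<bar> \<le> int l" using il by linarith
  hence "\<bar>(2 * int k + 1) * i\<bar> \<le> (2 * int k + 1) * int l"
    by (simp add: abs_mult mult_left_mono)
  thus "\<bar>(2 * int k + 1) * i + j\<bar> \<le> (2 * int k + 1) * int l + int k" using j by linarith
qed

definition Ch :: "nat \<Rightarrow> nat \<Rightarrow> pt \<Rightarrow> pt set" where
  "Ch k l t = (\<lambda>(i,j). (fst t + (2 * int k + 1) * i, snd t + (2 * int k + 1) * j))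
      ` ({- int l..int l} \<times> {- int l..int l})"

lemma card_Ch: "card (Ch k l t) \<le> (2 * l + 1)^2"
proof -
  have "card (Ch k l t) \<le> card ({- int l..int l} \<times> {- int l..int l})"
    unfolding Ch_def by (rule card_image_le) simp
  also have "\<dots> = (2 * l + 1)^2"
  proof -
    have "card {- int l..int l} = 2 * l + 1" by simp
    thus ?thesis by (simp add: card_cartesian_product power2_eq_square)
  qed
  finally show ?thesis .
qed

lemma child_parent:
  assumes "xs \<in> paths n" "z \<in> Lam k" "Ind z k n xs" "K = (2 * l + 1) * k + l"
  shows "\<exists>t. t \<in> Lam K \<and> t \<in> sqbox n \<and> Ind t K n xs \<and> z \<in> Ch k l t"
proof -
  obtain b where b: "b \<in> inner_bdry (rng n xs)" "b \<in> Qbox z k"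
    using assms(3) unfolding Ind_def by auto
  obtain a1 a2 where z: "z = ((2 * int k + 1) * a1, (2 * int k + 1) * a2)"
    using assms(2) unfolding Lam_def by auto
  have KK: "2 * int K + 1 = (2 * int k + 1) * (2 * int l + 1)" using assms(4) by (simp add: algebra_simps)
  define c1 where "c1 = (a1 + int l) div (2 * int l + 1)"
  define c2 where "c2 = (a2 + int l) div (2 * int l + 1)"
  define i1 where "i1 = (a1 + int l) mod (2 * int l + 1) - int l"
  define i2 where "i2 = (a2 + int l) mod (2 * int l + 1) - int l"
  note P1 = coord_parent[OF c1_def i1_def]
  note P2 = coord_parent[OF c2_def i2_def]
  define t where "t = ((2 * int K + 1) * c1, (2 * int K + 1) * c2)"
  have tL: "t \<in> Lam K" unfolding t_def Lam_def by auto
  have zt1: "fst z = fst t + (2 * int k + 1) * i1" unfolding z t_def KK using P1(1)[where k=k] by simp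
  have zt2: "snd z = snd t + (2 * int k + 1) * i2" unfolding z t_def KK using P2(1)[where k=k] by simp
  have zC: "z \<in> Ch k l t"
  proof -
    have "z = (fst t + (2 * int k + 1) * i1, snd t + (2 * int k + 1) * i2)" using zt1 zt2 by (simp add: prod_eq_iff)
    moreover have "(i1, i2) \<in> {- int l..int l} \<times> {- int l..int l}" using P1(2,3) P2(2,3) by simp
    ultimately show ?thesis unfolding Ch_def by (auto intro!: image_eqI[where x="(i1,i2)"])
  qed
  have q: "\<bar>fst b - fst z\<bar> \<le> int k" "\<bar>snd b - snd z\<bar> \<le> int k" using b(2) Qbox_iff by blast+
  have "\<bar>(2 * int k + 1) * i1 + (fst b - fst z)\<bar> \<le> (2 * int k + 1) * int l + int k" by (rule P1(4)[where k=k, OF q(1)])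
  moreover have "\<bar>(2 * int k + 1) * i2 + (snd b - snd z)\<bar> \<le> (2 * int k + 1) * int l + int k" by (rule P2(4)[where k=k, OF q(2)])
  moreover have "(2 * int k + 1) * int l + int k = int K" using assms(4) by (simp add: algebra_simps)
  ultimately have "b \<in> Qbox t K" unfolding Qbox_iff using zt1 zt2 by (simp add: algebra_simps)
  hence tI: "Ind t K n xs" using b(1) unfolding Ind_def by auto
  show ?thesis using tL tI zC parent_in_sqbox[OF assms(1) tL tI] by blast
qed



theorem mainTheorem14:
  fixes k l n :: nat
  defines "k' \<equiv> (2 * l + 1) * k + l"
  shows "cond_entropy2 (walk n) (bvec k n) (bvec k' n)
         \<le> measure_pmf.expectation (walk n) (\<lambda>xs. real (Mcount k' n xs)) * (2 * real l + 1)^2"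
proof -
  define m where "m = (2 * l + 1)^2"
  define D where "D = Lam k \<inter> sqbox n"
  define D' where "D' = Lam k' \<inter> sqbox n"
  define T where "T = (\<lambda>y::pt\<Rightarrow>bool. {t\<in>D'. y t})"
  define U where "U = (\<lambda>y. \<Union>t\<in>T y. Ch k l t)"
  define S where "S = (\<lambda>y. {x \<in> PiE D (\<lambda>_. UNIV::bool set). \<forall>z\<in>D. x z \<longrightarrow> z \<in> U y})"
  define w where "w = (\<lambda>(x::pt\<Rightarrow>bool) y. inverse ((2::real) ^ (m * card (T y))))"
  have finsq: "finite (sqbox n)"
  proof (rule finite_subset)
    show "sqbox n \<subseteq> {-2 * int n..2 * int n} \<times> {-2 * int n..2 * int n}"
      unfolding sqbox_def by auto
  qed simp
  have finD: "finite D" unfolding D_def using finsq by simp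
  have finD': "finite D'" unfolding D'_def using finsq by simp
  have finT: "finite (T y)" for y unfolding T_def using finD' by simp
  have finpaths: "finite (paths n)"
  proof (rule finite_subset)
    show "paths n \<subseteq> {xs. set xs \<subseteq> unit_steps \<and> length xs = n}" unfolding paths_def by auto
    show "finite {xs. set xs \<subseteq> unit_steps \<and> length xs = n}"
      by (rule finite_lists_length_eq) (simp add: unit_steps_def)
  qed
  have nepaths: "paths n \<noteq> {}"
  proof -
    have "replicate n (1,0) \<in> paths n" unfolding paths_def unit_steps_def by auto
    thus ?thesis by blast
  qed
  have setp: "set_pmf (walk n) = paths n"
    unfolding walk_def using finpaths nepaths by simp
  have finp: "finite (set_pmf (walk n))" using setp finpaths by simp
  have Tbvec: "T (bvec k' n xs) = {t \<in> Lam k'. Ind t k' n xs}" if xs: "xs \<in> paths n" for xs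
    unfolding T_def bvec_def D'_def using parent_in_sqbox[OF xs] by auto
  have XS: "bvec k n xs \<in> S (bvec k' n xs)" if xs: "xs \<in> set_pmf (walk n)" for xs
  proof -
    have xs': "xs \<in> paths n" using xs setp by simp
    have "bvec k n xs \<in> PiE D (\<lambda>_. UNIV::bool set)" unfolding bvec_def D_def by simp
    moreover have "z \<in> U (bvec k' n xs)" if z: "z \<in> D" "bvec k n xs z" for z
    proof -
      have "Ind z k n xs" "z \<in> Lam k" using z unfolding bvec_def D_def by auto
      then obtain t where t: "t \<in> Lam k'" "t \<in> sqbox n" "Ind t k' n xs" "z \<in> Ch k l t"
        using child_parent[OF xs', of z k k' l] k'_def by blast
      have "t \<in> T (bvec k' n xs)" using Tbvec[OF xs'] t by simp
      thus ?thesis unfolding U_def using t(4) by blast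
    qed
    ultimately show ?thesis unfolding S_def by blast
  qed
  have finS: "finite (S y)" for y
  proof (rule finite_subset)
    show "S y \<subseteq> PiE D (\<lambda>_. UNIV::bool set)" unfolding S_def by blast
    show "finite (PiE D (\<lambda>_. UNIV::bool set))" using finD by (intro finite_PiE) auto
  qed
  have wpos: "w x y > 0" for x y unfolding w_def by simp
  have wsum: "(\<Sum>x\<in>S y. w x y) \<le> 1" for y
  proof -
    define N where "N = m * card (T y)"
    have finCh: "finite (Ch k l t)" for t unfolding Ch_def by (intro finite_imageI) simp
    have finU: "finite (U y)" unfolding U_def using finT finCh by (intro finite_UN_I)
    have "card (D \<inter> U y) \<le> card (U y)" using finU by (intro card_mono) auto
    also have "\<dots> \<le> (\<Sum>t\<in>T y. card (Ch k l t))" unfolding U_def by (rule card_UN_le[OF finT])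
    also have "\<dots> \<le> (\<Sum>t\<in>T y. m)" unfolding m_def by (intro sum_mono card_Ch)
    also have "\<dots> = N" unfolding N_def by simp
    finally have cDU: "card (D \<inter> U y) \<le> N" .
    have inj: "inj_on (\<lambda>x. {z\<in>D. x z}) (S y)"
    proof (rule inj_onI)
      fix x1 x2 assume x1: "x1 \<in> S y" and x2: "x2 \<in> S y" and eq: "{z\<in>D. x1 z} = {z\<in>D. x2 z}"
      show "x1 = x2"
      proof (rule ext)
        fix z show "x1 z = x2 z"
        proof (cases "z \<in> D")
          case True thus ?thesis using eq by blast
        next
          case False
          have p1: "x1 \<in> PiE D (\<lambda>_. UNIV::bool set)" using x1 unfolding S_def by blast
          have p2: "x2 \<in> PiE D (\<lambda>_. UNIV::bool set)" using x2 unfolding S_def by blast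
          show ?thesis using PiE_arb[OF p1 False] PiE_arb[OF p2 False] by simp
        qed
      qed
    qed
    have "card (S y) \<le> card (Pow (D \<inter> U y))"
    proof (rule card_inj_on_le[OF inj])
      show "(\<lambda>x. {z\<in>D. x z}) ` S y \<subseteq> Pow (D \<inter> U y)" unfolding S_def by blast
      show "finite (Pow (D \<inter> U y))" using finD by simp
    qed
    also have "\<dots> = 2 ^ card (D \<inter> U y)" using finD by (intro card_Pow) simp
    also have "\<dots> \<le> 2 ^ N" using cDU by (intro power_increasing) auto
    finally have cS: "real (card (S y)) \<le> 2 ^ N" by (metis of_nat_le_iff of_nat_numeral of_nat_power)
    have "(\<Sum>x\<in>S y. w x y) = real (card (S y)) * inverse (2 ^ N)" unfolding w_def N_def by simp
    also have "\<dots> \<le> 2 ^ N * inverse (2 ^ N)" using cS by (intro mult_right_mono) auto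
    also have "\<dots> = 1" by simp
    finally show ?thesis .
  qed
  have "cond_entropy2 (walk n) (bvec k n) (bvec k' n)
      \<le> measure_pmf.expectation (walk n) (\<lambda>\<omega>. - log 2 (w (bvec k n \<omega>) (bvec k' n \<omega>)))"
    by (rule gibbs[where X="bvec k n" and Y="bvec k' n" and S=S and w=w, OF finp XS finS wpos wsum])
  also have "\<dots> = (\<Sum>a\<in>set_pmf (walk n). pmf (walk n) a * (- log 2 (w (bvec k n a) (bvec k' n a))))"
    by (rule fin_expect[OF finp])
  also have "\<dots> = (\<Sum>a\<in>set_pmf (walk n). pmf (walk n) a * real (Mcount k' n a) * real m)"
  proof (rule sum.cong[OF refl])
    fix a assume a: "a \<in> set_pmf (walk n)"
    hence a': "a \<in> paths n" using setp by simp
    have "- log 2 (w (bvec k n a) (bvec k' n a)) = real (m * card (T (bvec k' n a)))"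
      unfolding w_def by (simp add: log_inverse log_nat_power)
    also have "\<dots> = real (Mcount k' n a) * real m" unfolding Tbvec[OF a'] Mcount_def by simp
    finally show "pmf (walk n) a * (- log 2 (w (bvec k n a) (bvec k' n a))) = pmf (walk n) a * real (Mcount k' n a) * real m"
      by simp
  qed
  also have "\<dots> = (\<Sum>a\<in>set_pmf (walk n). pmf (walk n) a * real (Mcount k' n a)) * real m"
    by (simp add: sum_distrib_right)
  also have "\<dots> = measure_pmf.expectation (walk n) (\<lambda>xs. real (Mcount k' n xs)) * (2 * real l + 1)^2"
    unfolding m_def fin_expect[OF finp] by simp
  finally show ?thesis .
qed

end
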